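(* Let $\mathcal{X},\mathcal{Y}$ be families of metric spaces and $\alpha,\beta$ ordinals. (1) If $\mathcal{X}\in\mathfrak{C}_\beta$ and $\beta<\alpha$, then $\mathcal{X}\in\mathfrak{C}_\alpha$. (2) If $\mathcal{X},\mathcal{Y}\in\mathfrak{C}_\alpha$, then $\mathcal{X}\cup\mathcal{Y}\in\mathfrak{C}_\alpha$. (3) If $\mathcal{X}\prec\mathcal{Y}$ and $\mathcal{Y}\in\mathfrak{C}_\alpha$, then $\mathcal{X}\in\mathfrak{C}_\alpha$.
   Context: A family $\mathcal{U}$ of metric subspaces of a metric space $(X,d)$ is $r$-disjoint if $d(x,y)>r$ whenever $x\in U$, $y\in U'$, $U\neq U'$ in $\mathcal{U}$. For families $\mathcal{X},\mathcal{Y}$ and $R\in\mathbb{R}^{\mathbb{N}}$, $\mathcal{X}\xrightarrow{R}\mathcal{Y}$ means: there is an integer $k$ such that for each $X\in\mathcal{X}$ there are subcollections $\mathcal{U}_1,\dots,\mathcal{U}_k\subseteq\mathcal{Y}$ of subspaces of $X$, each $\mathcal{U}_i$ being $R_i$-disjoint, with $\bigcup_i\mathcal{U}_i$ covering $X$. A family is bounded if the diameters of its members are uniformly bounded. $\mathfrak{C}_0$ is the class of bounded families; for an ordinal $\alpha>0$, $\mathfrak{C}_\alpha$ is the class of families $\mathcal{X}$ such that for every $R\in\mathbb{R}^{\mathbb{N}}$ there exist $\beta<\alpha$ and $\mathcal{Y}\in\mathfrak{C}_\beta$ with $\mathcal{X}\xrightarrow{R}\mathcal{Y}$. $\mathcal{X}\prec\mathcal{Y}$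 means that every $X\in\mathcal{X}$ is a (metric) subspace of some $Y\in\mathcal{Y}$. *)

theory Defs
  imports "HOL-Analysis.Abstract_Metric_Spaces"
begin

definition msubspace :: "'a metric \<Rightarrow> 'a metric \<Rightarrow> bool" where
  "msubspace V X \<longleftrightarrow> mspace V \<subseteq> mspace X \<and> V = submetric X (mspace V)"

definition bounded_family :: "'a metric set \<Rightarrow> bool" where
  "bounded_family XX \<longleftrightarrow>
     (\<exists>D::real. \<forall>X\<in>XX. \<forall>x\<in>mspace X. \<forall>y\<in>mspace X. mdist X x y \<le> D)"

definition arrow :: "'a metric set \<Rightarrow> (nat \<Rightarrow> real) \<Rightarrow> 'a metric set \<Rightarrow> bool" where
  "arrow XX R YY \<longleftrightarrow>
     (\<exists>k::nat. \<forall>X\<in>XX. \<exists>U :: nat \<Rightarrow> 'a metric set.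
        (\<forall>i\<in>{1..k}. U i \<subseteq> YY \<and> (\<forall>V\<in>U i. msubspace V X) \<and>
            (\<forall>V\<in>U i. \<forall>V'\<in>U i. V \<noteq> V' \<longrightarrow>
               (\<forall>x\<in>mspace V. \<forall>y\<in>mspace V'. mdist X x y > R i))) \<and>
        mspace X \<subseteq> (\<Union>i\<in>{1..k}. \<Union>V\<in>U i. mspace V))"

definition Cls :: "'o::wellorder \<Rightarrow> 'a metric set set" where
  "Cls = wfrec {(b, a). b < a}
     (\<lambda>C a. if (\<forall>b. \<not> b < a) then {XX. bounded_family XX}
            else {XX. \<forall>R. \<exists>b. b < a \<and> (\<exists>YY\<in>C b. arrow XX R YY)})"

definition prec :: "'a metric set \<Rightarrow> 'a metric set \<Rightarrow> bool" where
  "prec XX YY \<longleftrightarrow> (\<forall>X\<in>XX. \<exists>Y\<in>YY. msubspace X Y)"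

lemma Cls_unfold:
  "Cls a = (if (\<forall>b. \<not> b < a) then {XX. bounded_family XX}
            else {XX. \<forall>R. \<exists>b. b < a \<and> (\<exists>YY\<in>Cls b. arrow XX R YY)})"
  unfolding Cls_def
  by (subst wfrec[OF wf]) (simp add: cut_def cong: conj_cong)

end

theory Submission
  imports Defs
begin

lemma msub_refl: "msubspace X X"
  by (simp add: msubspace_def)

lemma msub_dist: "msubspace V X \<Longrightarrow> mdist V = mdist X"
  unfolding msubspace_def by (metis mdist_submetric)

lemma msub_trans:
  assumes "msubspace A B" "msubspace B C" shows "msubspace A C"
proof -
  have AB: "mspace A \<subseteq> mspace B" "A = submetric B (mspace A)"
    using assms(1) by (auto simp: msubspace_def)
  have BC: "mspace B \<subseteq> mspace C" "B = submetric C (mspace B)"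
    using assms(2) by (auto simp: msubspace_def)
  have "A = submetric C (mspace B \<inter> mspace A)"
    using AB BC by (metis submetric_submetric)
  also have "mspace B \<inter> mspace A = mspace A" using AB by blast
  finally show ?thesis using AB BC unfolding msubspace_def by blast
qed

lemma Cls_nonmin: "\<not> (\<forall>b. \<not> b < a) \<Longrightarrow> XX \<in> Cls a \<longleftrightarrow> (\<forall>R. \<exists>b<a. \<exists>YY\<in>Cls b. arrow XX R YY)"
  by (subst Cls_unfold) auto

lemma Cls_min: "(\<forall>b. \<not> b < a) \<Longrightarrow> XX \<in> Cls a \<longleftrightarrow> bounded_family XX"
  by (subst Cls_unfold) simp

lemma arrow_self: "arrow XX R XX"
  unfolding arrow_def
  apply (rule exI[of _ 1])
  apply (intro ballI)
  subgoal for X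
    by (rule exI[of _ "\<lambda>i. {X}"]) (auto simp: msub_refl)
  done

lemma Cls_mono:
  assumes "XX \<in> Cls \<beta>" "\<beta> < \<alpha>" shows "XX \<in> Cls \<alpha>"
proof -
  have "\<not> (\<forall>b. \<not> b < \<alpha>)" using assms(2) by blast
  then show ?thesis
    using assms arrow_self by (subst Cls_unfold) auto
qed

lemma Cls_mono_le:
  assumes "XX \<in> Cls \<beta>" "\<beta> \<le> \<alpha>" shows "XX \<in> Cls \<alpha>"
  using assms Cls_mono[of XX \<beta> \<alpha>] by (cases "\<beta> = \<alpha>") auto

lemma arrow_prec:
  assumes "arrow YY R ZZ" "prec XX YY"
  shows "arrow XX R {W. \<exists>Z\<in>ZZ. msubspace W Z}"
proof -
  obtain k where k: "\<forall>Y\<in>YY. \<exists>U :: nat \<Rightarrow> 'a metric set.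
        (\<forall>i\<in>{1..k}. U i \<subseteq> ZZ \<and> (\<forall>V\<in>U i. msubspace V Y) \<and>
            (\<forall>V\<in>U i. \<forall>V'\<in>U i. V \<noteq> V' \<longrightarrow>
               (\<forall>x\<in>mspace V. \<forall>y\<in>mspace V'. mdist Y x y > R i))) \<and>
        mspace Y \<subseteq> (\<Union>i\<in>{1..k}. \<Union>V\<in>U i. mspace V)"
    using assms(1) unfolding arrow_def by (rule exE)
  show ?thesis unfolding arrow_def
  proof (rule exI[of _ k], intro ballI)
    fix X assume X: "X \<in> XX"
    then obtain Y where Y: "Y \<in> YY" "msubspace X Y" using assms(2) by (auto simp: prec_def)
    then obtain U where U: "\<forall>i\<in>{1..k}. U i \<subseteq> ZZ \<and> (\<forall>V\<in>U i. msubspace V Y) \<and>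
            (\<forall>V\<in>U i. \<forall>V'\<in>U i. V \<noteq> V' \<longrightarrow>
               (\<forall>x\<in>mspace V. \<forall>y\<in>mspace V'. mdist Y x y > R i))"
       "mspace Y \<subseteq> (\<Union>i\<in>{1..k}. \<Union>V\<in>U i. mspace V)"
      using bspec[OF k Y(1)] by (elim exE conjE) (rule that)
    have XY: "mspace X \<subseteq> mspace Y" "X = submetric Y (mspace X)"
      using Y(2) by (auto simp: msubspace_def)
    have dXY: "mdist X = mdist Y" using Y(2) by (rule msub_dist)
    define U' where "U' i = (\<lambda>V. submetric V (mspace X)) ` U i" for i
    have sub1: "msubspace (submetric V (mspace X)) V" for V
      unfolding msubspace_def
      by (simp add: Int_commute) (metis submetric_restrict)
    have sub2: "msubspace (submetric V (mspace X)) X" if "msubspace V Y" for V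
    proof -
      have V: "V = submetric Y (mspace V)" using that by (auto simp: msubspace_def)
      have "submetric V (mspace X) = submetric Y (mspace V \<inter> mspace X)"
        using V by (metis submetric_submetric)
      moreover have "submetric X (mspace X \<inter> mspace V) = submetric Y (mspace X \<inter> (mspace X \<inter> mspace V))"
        using XY by (metis submetric_submetric)
      moreover have "mspace X \<inter> (mspace X \<inter> mspace V) = mspace V \<inter> mspace X" by blast
      moreover have "mspace (submetric V (mspace X)) = mspace X \<inter> mspace V" by simp
      ultimately show ?thesis unfolding msubspace_def by (metis Int_lower1)
    qed
    show "\<exists>U. (\<forall>i\<in>{1..k}. U i \<subseteq> {W. \<exists>Z\<in>ZZ. msubspace W Z} \<and> (\<forall>V\<in>U i. msubspace V X) \<and>
            (\<forall>V\<in>U i. \<forall>V'\<in>U i. V \<noteq> V' \<longrightarrow>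
               (\<forall>x\<in>mspace V. \<forall>y\<in>mspace V'. mdist X x y > R i))) \<and>
        mspace X \<subseteq> (\<Union>i\<in>{1..k}. \<Union>V\<in>U i. mspace V)"
    proof (rule exI[of _ U'], intro conjI ballI)
      fix i assume i: "i \<in> {1..k}"
      have Ui0: "U i \<subseteq> ZZ \<and> (\<forall>V\<in>U i. msubspace V Y) \<and> (\<forall>V\<in>U i. \<forall>V'\<in>U i. V \<noteq> V' \<longrightarrow>
               (\<forall>x\<in>mspace V. \<forall>y\<in>mspace V'. mdist Y x y > R i))"
        by (rule bspec[OF U(1) i])
      note Ui = conjunct1[OF Ui0] conjunct1[OF conjunct2[OF Ui0]] conjunct2[OF conjunct2[OF Ui0]]
      show "U' i \<subseteq> {W. \<exists>Z\<in>ZZ. msubspace W Z}"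
        unfolding U'_def using Ui(1) sub1 by blast
      show "msubspace W X" if "W \<in> U' i" for W
        using that Ui sub2 by (auto simp: U'_def)
      show "V \<noteq> V' \<longrightarrow> (\<forall>x\<in>mspace V. \<forall>y\<in>mspace V'. mdist X x y > R i)"
        if "V \<in> U' i" "V' \<in> U' i" for V V'
        using that Ui dXY by (fastforce simp: U'_def)
    next
      show "mspace X \<subseteq> (\<Union>i\<in>{1..k}. \<Union>V\<in>U' i. mspace V)"
        using U(2) XY(1) by (fastforce simp: U'_def)
    qed
  qed
qed

lemma Cls_prec:
  "prec XX YY \<Longrightarrow> YY \<in> Cls \<alpha> \<Longrightarrow> XX \<in> Cls \<alpha>"
proof (induction \<alpha> arbitrary: XX YY rule: less_induct)
  case (less a)
  show ?case
  proof (cases "\<forall>b. \<not> b < a")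
    case True
    then have "bounded_family YY" using less.prems(2) Cls_min by blast
    then obtain D where D: "\<forall>X\<in>YY. \<forall>x\<in>mspace X. \<forall>y\<in>mspace X. mdist X x y \<le> D"
      unfolding bounded_family_def by blast
    have "bounded_family XX" unfolding bounded_family_def
    proof (rule exI[of _ D], intro ballI)
      fix X x y assume "X \<in> XX" "x \<in> mspace X" "y \<in> mspace X"
      moreover obtain Y where "Y \<in> YY" "msubspace X Y"
        using \<open>X \<in> XX\<close> less.prems(1) by (auto simp: prec_def)
      ultimately show "mdist X x y \<le> D" using D msub_dist[of X Y]
        by (auto simp: msubspace_def)
    qed
    then show ?thesis using True Cls_min by blast
  next
    case False
    have "\<exists>b<a. \<exists>ZZ'\<in>Cls b. arrow XX R ZZ'" for R
    proof -
      obtain b ZZ where b: "b < a" "ZZ \<in> Cls b" "arrow YY R ZZ"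
        using less.prems(2) False Cls_nonmin by blast
      have "prec {W. \<exists>Z\<in>ZZ. msubspace W Z} ZZ" by (auto simp: prec_def)
      then have "{W. \<exists>Z\<in>ZZ. msubspace W Z} \<in> Cls b" using less.IH b by blast
      then show ?thesis using b arrow_prec less.prems(1) by blast
    qed
    then show ?thesis using False Cls_nonmin by blast
  qed
qed

lemma arrow_union:
  assumes "arrow XX R AA" "arrow YY R BB"
  shows "arrow (XX \<union> YY) R (AA \<union> BB)"
proof -
  obtain k1 where k1: "\<forall>X\<in>XX. \<exists>U :: nat \<Rightarrow> 'a metric set.
        (\<forall>i\<in>{1..k1}. U i \<subseteq> AA \<and> (\<forall>V\<in>U i. msubspace V X) \<and>
            (\<forall>V\<in>U i. \<forall>V'\<in>U i. V \<noteq> V' \<longrightarrow>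
               (\<forall>x\<in>mspace V. \<forall>y\<in>mspace V'. mdist X x y > R i))) \<and>
        mspace X \<subseteq> (\<Union>i\<in>{1..k1}. \<Union>V\<in>U i. mspace V)"
    using assms(1) unfolding arrow_def by (rule exE)
  obtain k2 where k2: "\<forall>X\<in>YY. \<exists>U :: nat \<Rightarrow> 'a metric set.
        (\<forall>i\<in>{1..k2}. U i \<subseteq> BB \<and> (\<forall>V\<in>U i. msubspace V X) \<and>
            (\<forall>V\<in>U i. \<forall>V'\<in>U i. V \<noteq> V' \<longrightarrow>
               (\<forall>x\<in>mspace V. \<forall>y\<in>mspace V'. mdist X x y > R i))) \<and>
        mspace X \<subseteq> (\<Union>i\<in>{1..k2}. \<Union>V\<in>U i. mspace V)"
    using assms(2) unfolding arrow_def by (rule exE)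
  have ext: "\<exists>U. (\<forall>i\<in>{1..max k1 k2}. U i \<subseteq> AA \<union> BB \<and> (\<forall>V\<in>U i. msubspace V X) \<and>
            (\<forall>V\<in>U i. \<forall>V'\<in>U i. V \<noteq> V' \<longrightarrow>
               (\<forall>x\<in>mspace V. \<forall>y\<in>mspace V'. mdist X x y > R i))) \<and>
        mspace X \<subseteq> (\<Union>i\<in>{1..max k1 k2}. \<Union>V\<in>U i. mspace V)"
    if H: "\<exists>U :: nat \<Rightarrow> 'a metric set.
        (\<forall>i\<in>{1..k}. U i \<subseteq> CC \<and> (\<forall>V\<in>U i. msubspace V X) \<and>
            (\<forall>V\<in>U i. \<forall>V'\<in>U i. V \<noteq> V' \<longrightarrow>
               (\<forall>x\<in>mspace V. \<forall>y\<in>mspace V'. mdist X x y > R i))) \<and>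
        mspace X \<subseteq> (\<Union>i\<in>{1..k}. \<Union>V\<in>U i. mspace V)" "CC \<subseteq> AA \<union> BB" "k \<le> max k1 k2"
    for X CC k
  proof -
    obtain U where U: "\<forall>i\<in>{1..k}. U i \<subseteq> CC \<and> (\<forall>V\<in>U i. msubspace V X) \<and>
            (\<forall>V\<in>U i. \<forall>V'\<in>U i. V \<noteq> V' \<longrightarrow>
               (\<forall>x\<in>mspace V. \<forall>y\<in>mspace V'. mdist X x y > R i))"
        "mspace X \<subseteq> (\<Union>i\<in>{1..k}. \<Union>V\<in>U i. mspace V)" using H(1) by (elim exE conjE) (rule that)
    show ?thesis
    proof (rule exI[of _ "\<lambda>i. if i \<le> k then U i else {}"], intro conjI ballI)
      fix i assume i: "i \<in> {1..max k1 k2}"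
      have Ui: "i \<le> k \<Longrightarrow> U i \<subseteq> CC \<and> (\<forall>V\<in>U i. msubspace V X) \<and> (\<forall>V\<in>U i. \<forall>V'\<in>U i. V \<noteq> V' \<longrightarrow>
               (\<forall>x\<in>mspace V. \<forall>y\<in>mspace V'. mdist X x y > R i))"
        using i by (intro bspec[OF U(1)]) simp
      show "(if i \<le> k then U i else {}) \<subseteq> AA \<union> BB"
        proof (cases "i \<le> k")
        case True then show ?thesis using conjunct1[OF Ui[OF True]] H(2) by simp
      qed simp
      show "msubspace V X" if "V \<in> (if i \<le> k then U i else {})" for V
        using that Ui by (cases "i \<le> k") auto
      show "V \<noteq> V' \<longrightarrow> (\<forall>x\<in>mspace V. \<forall>y\<in>mspace V'. mdist X x y > R i)"
        if "V \<in> (if i \<le> k then U i else {})" "V' \<in> (if i \<le> k then U i else {})" for V V'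
        using that Ui by (cases "i \<le> k") auto
    next
      show "mspace X \<subseteq> (\<Union>i\<in>{1..max k1 k2}. \<Union>V\<in>(if i \<le> k then U i else {}). mspace V)"
        using U(2) H(3) by fastforce
    qed
  qed
  show ?thesis unfolding arrow_def
  proof (rule exI[of _ "max k1 k2"], intro ballI)
    fix X assume "X \<in> XX \<union> YY"
    then show "\<exists>U. (\<forall>i\<in>{1..max k1 k2}. U i \<subseteq> AA \<union> BB \<and> (\<forall>V\<in>U i. msubspace V X) \<and>
            (\<forall>V\<in>U i. \<forall>V'\<in>U i. V \<noteq> V' \<longrightarrow>
               (\<forall>x\<in>mspace V. \<forall>y\<in>mspace V'. mdist X x y > R i))) \<and>
        mspace X \<subseteq> (\<Union>i\<in>{1..max k1 k2}. \<Union>V\<in>U i. mspace V)"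
    proof
      assume X: "X \<in> XX" show ?thesis by (rule ext[of k1 AA X, OF bspec[OF k1 X]]) auto
    next
      assume X: "X \<in> YY" show ?thesis by (rule ext[of k2 BB X, OF bspec[OF k2 X]]) auto
    qed
  qed
qed

lemma Cls_union:
  "XX \<in> Cls \<alpha> \<Longrightarrow> YY \<in> Cls \<alpha> \<Longrightarrow> XX \<union> YY \<in> Cls \<alpha>"
proof (induction \<alpha> arbitrary: XX YY rule: less_induct)
  case (less a)
  show ?case
  proof (cases "\<forall>b. \<not> b < a")
    case True
    then have "bounded_family XX" "bounded_family YY" using less.prems Cls_min by blast+
    then obtain D1 D2 where
      D1: "\<forall>X\<in>XX. \<forall>x\<in>mspace X. \<forall>y\<in>mspace X. mdist X x y \<le> D1" and
      D2: "\<forall>X\<in>YY. \<forall>x\<in>mspace X. \<forall>y\<in>mspace X. mdist X x y \<le> D2"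
      unfolding bounded_family_def by blast
    have "bounded_family (XX \<union> YY)" unfolding bounded_family_def
      apply (rule exI[of _ "max D1 D2"])
      using D1 D2 by (auto simp: le_max_iff_disj)
    then show ?thesis using True Cls_min by blast
  next
    case False
    have "\<exists>b<a. \<exists>ZZ\<in>Cls b. arrow (XX \<union> YY) R ZZ" for R
    proof -
      obtain b1 AA where b1: "b1 < a" "AA \<in> Cls b1" "arrow XX R AA"
        using less.prems(1) False Cls_nonmin by blast
      obtain b2 BB where b2: "b2 < a" "BB \<in> Cls b2" "arrow YY R BB"
        using less.prems(2) False Cls_nonmin by blast
      have "AA \<in> Cls (max b1 b2)" "BB \<in> Cls (max b1 b2)"
        using b1 b2 Cls_mono_le by (auto intro: max.cobounded1 max.cobounded2)
      then have "AA \<union> BB \<in> Cls (max b1 b2)" using less.IH b1 b2 by auto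
      moreover have "max b1 b2 < a" using b1 b2 by auto
      ultimately show ?thesis using arrow_union[OF b1(3) b2(3)] by blast
    qed
    then show ?thesis using False Cls_nonmin by blast
  qed
qed

theorem lemma3p3:
  fixes XX YY :: "'a metric set" and \<alpha> \<beta> :: "'o::wellorder"
  shows "(XX \<in> Cls \<beta> \<and> \<beta> < \<alpha> \<longrightarrow> XX \<in> Cls \<alpha>)
       \<and> (XX \<in> Cls \<alpha> \<and> YY \<in> Cls \<alpha> \<longrightarrow> XX \<union> YY \<in> Cls \<alpha>)
       \<and> (prec XX YY \<and> YY \<in> Cls \<alpha> \<longrightarrow> XX \<in> Cls \<alpha>)"
  using Cls_mono Cls_union Cls_prec by blast

end
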